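(* Let $m\ge1$, let $p_1,\dots,p_m\ge 0$ with $p_1+\cdots+p_m=1$, and let $S$ be a finite nonempty word on $[m]$ all of whose letters have positive probability. Roll a die showing face $i$ with probability $p_i$ independently until $S$ first appears as a block of consecutive outcomes, and let $Y$ be the number of rolls. Then \[ \operatorname{Var}(Y) = E(Y^2)-E(Y)^2 = \left(\sum_{R\in\operatorname{overlap}(S)} \frac{1}{P(R)} \right)^2 + \sum_{R\in\operatorname{overlap}(S)} \frac{(1-|R|)^2-|R|^2}{P(R)}. \]
   Context: For a word $w=w_1\cdots w_\ell$, $|w|=\ell$ and $P(w)=p_{w_1}\cdots p_{w_\ell}$. An overlap of $S$ is a nonempty word that is both a prefix and a suffix of $S$ (including $S$ itself); $\operatorname{overlap}(S)$ is the set of overlaps. *)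

theory Defs
  imports "HOL-Probability.Probability" "HOL-Library.Sublist"
begin

definition die :: "nat \<Rightarrow> (nat \<Rightarrow> real) \<Rightarrow> nat pmf" where
  "die m p = embed_pmf (\<lambda>i. if i \<in> {1..m} then p i else 0)"

definition rolls :: "nat \<Rightarrow> (nat \<Rightarrow> real) \<Rightarrow> nat stream measure" where
  "rolls m p = stream_space (measure_pmf (die m p))"

definition wait_time :: "nat list \<Rightarrow> nat stream \<Rightarrow> nat" where
  "wait_time S \<omega> = (LEAST n. length S \<le> n \<and> drop (n - length S) (stake n \<omega>) = S)"

definition wprob :: "(nat \<Rightarrow> real) \<Rightarrow> nat list \<Rightarrow> real" where
  "wprob p w = prod_list (map p w)"

definition overlap :: "'a list \<Rightarrow> 'a list set" where
  "overlap S = {R. R \<noteq> [] \<and> prefix R S \<and> suffix R S}"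

end

theory Submission
  imports Defs
begin

lemma meas_stake: "stake n \<in> measurable (stream_space (measure_pmf (D::nat pmf))) (count_space UNIV)"
  by (subst measurable_cong_sets[OF sets_stream_space_cong[OF sets_measure_pmf_count_space] refl])
     (rule measurable_stake)
lemma meas_fun_stake: "(\<lambda>\<omega>. g (stake n \<omega>)) \<in> borel_measurable (stream_space (measure_pmf (D::nat pmf)))"
  by (rule measurable_compose[OF meas_stake]) simp

lemma meas_dep:
  assumes "\<And>\<omega> \<omega>'. (\<And>i. i < n \<Longrightarrow> \<omega> !! i = \<omega>' !! i) \<Longrightarrow> f \<omega> = f \<omega>'"
  shows "f \<in> borel_measurable (stream_space (measure_pmf (D::nat pmf)))"
proof -
  obtain s :: "nat stream" where True by simp
  have "f = (\<lambda>\<omega>. f (stake n \<omega> @- s))"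
    by (rule ext, rule assms) simp
  then show ?thesis using meas_fun_stake[of "\<lambda>w. f (w @- s)" n D] by metis
qed

lemma meas_dep_gen:
  assumes N: "space N = UNIV"
    and dep: "\<And>\<omega> \<omega>'. (\<And>i. i < n \<Longrightarrow> \<omega> !! i = \<omega>' !! i) \<Longrightarrow> f \<omega> = f \<omega>'"
  shows "f \<in> measurable (stream_space (measure_pmf (D::nat pmf))) N"
proof -
  obtain s :: "nat stream" where True by simp
  have e: "f = (\<lambda>\<omega>. f (stake n \<omega> @- s))"
    by (rule ext, rule dep) simp
  have "(\<lambda>\<omega>. f (stake n \<omega> @- s)) \<in> measurable (stream_space (measure_pmf D)) N"
    by (rule measurable_compose[OF meas_stake]) (simp add: N)
  then show ?thesis using e by metis
qed

lemma prob_space_S: "prob_space (stream_space (measure_pmf (D::nat pmf)))"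
  by (rule prob_space.prob_space_stream_space) (rule prob_space_measure_pmf)

lemma factor:
  fixes g :: "nat list \<Rightarrow> ennreal" and h :: "nat stream \<Rightarrow> ennreal"
  assumes h[measurable]: "h \<in> borel_measurable (stream_space (measure_pmf D))"
  shows "(\<integral>\<^sup>+\<omega>. g (stake n \<omega>) * h (sdrop n \<omega>) \<partial>stream_space (measure_pmf D))
       = (\<integral>\<^sup>+\<omega>. g (stake n \<omega>) \<partial>stream_space (measure_pmf D)) * (\<integral>\<^sup>+\<omega>. h \<omega> \<partial>stream_space (measure_pmf D))"
proof (induction n arbitrary: g)
  case 0
  interpret S: prob_space "stream_space (measure_pmf D)" by (rule prob_space_S)
  show ?case by (simp add: nn_integral_cmult S.emeasure_space_1)
next
  case (Suc n)
  interpret prob_space "measure_pmf D" by (rule prob_space_measure_pmf)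
  have m1: "(\<lambda>\<omega>. g (stake (Suc n) \<omega>) * h (sdrop (Suc n) \<omega>)) \<in> borel_measurable (stream_space (measure_pmf D))"
    using meas_fun_stake[of g "Suc n" D] by measurable
  have m2: "(\<lambda>\<omega>. g (stake (Suc n) \<omega>)) \<in> borel_measurable (stream_space (measure_pmf D))"
    using meas_fun_stake[of g "Suc n" D] by simp
  have "(\<integral>\<^sup>+\<omega>. g (stake (Suc n) \<omega>) * h (sdrop (Suc n) \<omega>) \<partial>stream_space (measure_pmf D))
      = (\<integral>\<^sup>+x. (\<integral>\<^sup>+X. g (x # stake n X) * h (sdrop n X) \<partial>stream_space (measure_pmf D)) \<partial>measure_pmf D)"
    by (subst prob_space.nn_integral_stream_space[OF prob_space_measure_pmf m1]) simp
  also have "\<dots> = (\<integral>\<^sup>+x. (\<integral>\<^sup>+X. g (x # stake n X) \<partial>stream_space (measure_pmf D)) * (\<integral>\<^sup>+\<omega>. h \<omega> \<partial>stream_space (measure_pmf D)) \<partial>measure_pmf D)"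
    using Suc.IH[of "\<lambda>w. g (_ # w)"] by simp
  also have "\<dots> = (\<integral>\<^sup>+x. (\<integral>\<^sup>+X. g (x # stake n X) \<partial>stream_space (measure_pmf D)) \<partial>measure_pmf D) * (\<integral>\<^sup>+\<omega>. h \<omega> \<partial>stream_space (measure_pmf D))"
    by (rule nn_integral_multc) simp
  also have "(\<integral>\<^sup>+x. (\<integral>\<^sup>+X. g (x # stake n X) \<partial>stream_space (measure_pmf D)) \<partial>measure_pmf D) = (\<integral>\<^sup>+\<omega>. g (stake (Suc n) \<omega>) \<partial>stream_space (measure_pmf D))"
    by (subst prob_space.nn_integral_stream_space[OF prob_space_measure_pmf m2]) simp
  finally show ?case .
qed

lemma factor_dep:
  fixes f h :: "nat stream \<Rightarrow> ennreal"
  assumes h: "h \<in> borel_measurable (stream_space (measure_pmf D))"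
    and f: "\<And>\<omega> \<omega>'. (\<And>i. i < n \<Longrightarrow> \<omega> !! i = \<omega>' !! i) \<Longrightarrow> f \<omega> = f \<omega>'"
  shows "(\<integral>\<^sup>+\<omega>. f \<omega> * h (sdrop n \<omega>) \<partial>stream_space (measure_pmf D))
       = (\<integral>\<^sup>+\<omega>. f \<omega> \<partial>stream_space (measure_pmf D)) * (\<integral>\<^sup>+\<omega>. h \<omega> \<partial>stream_space (measure_pmf D))"
proof -
  obtain s :: "nat stream" where True by simp
  have e: "f \<omega> = f (stake n \<omega> @- s)" for \<omega> by (rule f) simp
  show ?thesis
    using factor[OF h, of "\<lambda>w. f (w @- s)" n] by (simp add: e[symmetric])
qed

definition pre :: "nat list \<Rightarrow> nat stream \<Rightarrow> bool" where
  "pre w \<omega> = (\<forall>i<length w. \<omega> !! i = w ! i)"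

lemma pre_Cons: "pre (x # w) \<omega> = (shd \<omega> = x \<and> pre w (stl \<omega>))"
  unfolding pre_def by (auto simp: less_Suc_eq_0_disj)

lemma prob_pre:
  "(\<integral>\<^sup>+\<omega>. (if pre w \<omega> then 1 else 0) \<partial>stream_space (measure_pmf (D::nat pmf))) = ennreal (prod_list (map (pmf D) w))"
proof (induction w)
  case Nil
  interpret S: prob_space "stream_space (measure_pmf D)" by (rule prob_space_S)
  show ?case by (simp add: pre_def S.emeasure_space_1)
next
  case (Cons x w)
  interpret prob_space "measure_pmf D" by (rule prob_space_measure_pmf)
  have m: "(\<lambda>\<omega>. if pre w \<omega> then 1 else 0 :: ennreal) \<in> borel_measurable (stream_space (measure_pmf D))" for w
    by (rule meas_dep[of "length w"]) (auto simp: pre_def)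
  have "(\<integral>\<^sup>+\<omega>. (if pre (x#w) \<omega> then 1 else 0) \<partial>stream_space (measure_pmf D))
     = (\<integral>\<^sup>+y. (\<integral>\<^sup>+X. indicator {x} y * (if pre w X then 1 else 0) \<partial>stream_space (measure_pmf D)) \<partial>measure_pmf D)"
    by (subst prob_space.nn_integral_stream_space[OF prob_space_measure_pmf m]) (auto simp: pre_Cons intro!: nn_integral_cong split: split_indicator)
  also have "\<dots> = (\<integral>\<^sup>+y. indicator {x} y * ennreal (prod_list (map (pmf D) w)) \<partial>measure_pmf D)"
    by (subst nn_integral_cmult) (auto simp: Cons.IH m)
  also have "\<dots> = ennreal (pmf D x) * ennreal (prod_list (map (pmf D) w))"
    by (subst nn_integral_multc) (auto simp: emeasure_pmf_single)
  also have "\<dots> = ennreal (prod_list (map (pmf D) (x # w)))"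
    by (simp only: list.map prod_list.Cons, subst ennreal_mult) (auto intro!: prod_list_nonneg)
  finally show ?case .
qed

lemma overlap_char:
  "R \<in> overlap S \<longleftrightarrow> (1 \<le> length R \<and> length R \<le> length S \<and> R = take (length R) S
      \<and> (\<forall>i<length R. S ! i = S ! (length S - length R + i)))"
proof
  assume "R \<in> overlap S"
  then have ne: "R \<noteq> []" and pf: "prefix R S" and sf: "suffix R S" by (auto simp: overlap_def)
  from sf obtain zs where zs: "S = zs @ R" by (auto simp: suffix_def)
  have "R = take (length R) S" using pf by (metis append_eq_conv_conj prefix_def)
  moreover have "\<forall>i<length R. S ! i = S ! (length S - length R + i)"
  proof (intro allI impI)
    fix i assume i: "i < length R"
    have "S ! i = R ! i" using \<open>R = take (length R) S\<close> i by (metis nth_take)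
    also have "\<dots> = S ! (length S - length R + i)" using zs i by (simp add: nth_append)
    finally show "S ! i = S ! (length S - length R + i)" .
  qed
  ultimately show "1 \<le> length R \<and> length R \<le> length S \<and> R = take (length R) S
      \<and> (\<forall>i<length R. S ! i = S ! (length S - length R + i))"
    using ne zs by (auto simp: Suc_le_eq)
next
  assume h: "1 \<le> length R \<and> length R \<le> length S \<and> R = take (length R) S
      \<and> (\<forall>i<length R. S ! i = S ! (length S - length R + i))"
  then have ne: "R \<noteq> []" by auto
  have pf: "prefix R S" using h by (metis take_is_prefix)
  have "drop (length S - length R) S = R"
  proof (rule nth_equalityI)
    show "length (drop (length S - length R) S) = length R" using h by simp
    fix i assume "i < length (drop (length S - length R) S)"
    then have i: "i < length R" using h by simp
    have "drop (length S - length R) S ! i = S ! (length S - length R + i)"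
      using h i by (simp add: nth_drop)
    also have "\<dots> = S ! i" using h i by simp
    also have "\<dots> = R ! i" using h i by (metis nth_take)
    finally show "drop (length S - length R) S ! i = R ! i" .
  qed
  then have sf: "suffix R S" by (metis suffix_drop)
  show "R \<in> overlap S" using ne pf sf by (simp add: overlap_def)
qed

lemma finite_overlap: "finite (overlap S)"
proof -
  have "overlap S \<subseteq> (\<lambda>l. take l S) ` {..length S}"
    using overlap_char by (auto intro!: image_eqI)
  then show ?thesis by (rule finite_subset) simp
qed

locale pat =
  fixes m :: nat and p :: "nat \<Rightarrow> real" and S :: "nat list"
  assumes m1: "m \<ge> 1"
    and nn: "\<And>i. i \<in> {1..m} \<Longrightarrow> p i \<ge> 0"
    and sum1: "(\<Sum>i=1..m. p i) = 1"
    and Sne: "S \<noteq> []"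
    and Sl: "\<And>x. x \<in> set S \<Longrightarrow> x \<in> {1..m} \<and> p x > 0"
begin

abbreviation "D \<equiv> die m p"
abbreviation "M \<equiv> stream_space (measure_pmf D)"
abbreviation "k \<equiv> length S"

lemma M_eq: "rolls m p = M" by (simp add: rolls_def)

lemma pmf_die: "pmf D i = (if i \<in> {1..m} then p i else 0)"
proof -
  have "(\<integral>\<^sup>+x. ennreal (if x \<in> {1..m} then p x else 0) \<partial>count_space UNIV) = (\<Sum>x\<in>{1..m}. ennreal (if x \<in> {1..m} then p x else 0))"
    by (rule nn_integral_count_space') auto
  also have "\<dots> = (\<Sum>x\<in>{1..m}. ennreal (p x))" by simp
  also have "\<dots> = ennreal (\<Sum>x\<in>{1..m}. p x)" by (rule sum_ennreal) (simp add: nn)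
  also have "\<dots> = 1" using sum1 by simp
  finally show ?thesis unfolding die_def
    by (subst pmf_embed_pmf) (auto simp: nn)
qed

lemma wprob_eq: "set w \<subseteq> set S \<Longrightarrow> prod_list (map (pmf D) w) = wprob p w"
  unfolding wprob_def by (induction w) (auto simp: pmf_die dest: Sl)

lemma wprob_pos: "set w \<subseteq> set S \<Longrightarrow> wprob p w > 0"
  unfolding wprob_def by (induction w) (auto dest: Sl)

lemma prob_preS: "set w \<subseteq> set S \<Longrightarrow> (\<integral>\<^sup>+\<omega>. (if pre w \<omega> then 1 else 0) \<partial>M) = ennreal (wprob p w)"
  using prob_pre[where w=w and D=D] wprob_eq by simp

definition occ :: "nat \<Rightarrow> nat stream \<Rightarrow> bool" where
  "occ i \<omega> = (k \<le> i \<and> (\<forall>j<k. \<omega> !! (i - k + j) = S ! j))"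

lemma wait_pred: "(k \<le> n \<and> drop (n - k) (stake n \<omega>) = S) = occ n \<omega>"
proof (cases "k \<le> n")
  case True
  have "drop (n - k) (stake n \<omega>) = S \<longleftrightarrow> (\<forall>j<k. \<omega> !! (n - k + j) = S ! j)"
    using True by (auto simp: list_eq_iff_nth_eq)
  then show ?thesis using True by (simp add: occ_def)
qed (simp add: occ_def)

lemma wait_eq: "wait_time S \<omega> = (LEAST n. occ n \<omega>)"
  unfolding wait_time_def wait_pred ..

definition T :: "nat \<Rightarrow> nat stream \<Rightarrow> bool" where
  "T n \<omega> = (\<forall>i\<le>n. \<not> occ i \<omega>)"
definition Fst :: "nat \<Rightarrow> nat stream \<Rightarrow> bool" where
  "Fst j \<omega> = (occ j \<omega> \<and> (\<forall>i<j. \<not> occ i \<omega>))"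

lemma occ_dep: "(\<And>i. i < n \<Longrightarrow> \<omega> !! i = \<omega>' !! i) \<Longrightarrow> j \<le> n \<Longrightarrow> occ j \<omega> = occ j \<omega>'"
  unfolding occ_def using Sne
  by (smt (verit, best) add_diff_inverse_nat add_less_cancel_left le_trans less_diff_conv2 linorder_not_le)

lemma T_dep: "(\<And>i. i < n \<Longrightarrow> \<omega> !! i = \<omega>' !! i) \<Longrightarrow> T n \<omega> = T n \<omega>'"
  unfolding T_def using occ_dep[of n \<omega> \<omega>'] by auto
lemma Fst_dep: "(\<And>i. i < n \<Longrightarrow> \<omega> !! i = \<omega>' !! i) \<Longrightarrow> Fst n \<omega> = Fst n \<omega>'"
  unfolding Fst_def using occ_dep[of n \<omega> \<omega>'] by auto
lemma meas_occ: "Measurable.pred M (occ j)"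
  by (rule meas_dep_gen[where n=j]) (simp, metis occ_dep order_refl)
lemma meas_T': "(\<lambda>\<omega>. if T n \<omega> then 1 else 0 :: ennreal) \<in> borel_measurable M"
  by (rule meas_dep_gen[where n=n]) (simp, metis T_dep)
lemma meas_Fst': "(\<lambda>\<omega>. if Fst n \<omega> then 1 else 0 :: ennreal) \<in> borel_measurable M"
  by (rule meas_dep_gen[where n=n]) (simp, metis Fst_dep)
lemma meas_W: "(\<lambda>\<omega>. wait_time S \<omega>) \<in> measurable M (count_space UNIV)"
  unfolding wait_eq by (rule measurable_Least) (rule meas_occ)

end

context pat begin

lemma Fst_unique: "Fst a \<omega> \<Longrightarrow> Fst b \<omega> \<Longrightarrow> a = b"
  unfolding Fst_def by (metis linorder_neqE_nat)

lemma comb: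
  "(T n \<omega> \<and> pre S (sdrop n \<omega>)) \<longleftrightarrow>
   (\<exists>l. 1 \<le> l \<and> l \<le> k \<and> (\<forall>i<l. S ! i = S ! (k - l + i)) \<and> Fst (n + l) \<omega> \<and> pre (drop l S) (sdrop (n + l) \<omega>))"
proof
  assume h: "T n \<omega> \<and> pre S (sdrop n \<omega>)"
  then have hS: "\<And>j. j < k \<Longrightarrow> \<omega> !! (n + j) = S ! j" by (auto simp: pre_def sdrop_snth)
  have o: "occ (n + k) \<omega>" unfolding occ_def using hS by simp
  define J where "J = (LEAST j. occ j \<omega>)"
  have oJ: "occ J \<omega>" unfolding J_def using o by (rule LeastI)
  have Jle: "J \<le> n + k" unfolding J_def using o by (rule Least_le)
  have Jmin: "\<And>i. i < J \<Longrightarrow> \<not> occ i \<omega>" unfolding J_def using not_less_Least by blast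
  have Jn: "n < J" using h oJ unfolding T_def by (meson not_less)
  have kJ: "k \<le> J" using oJ by (simp add: occ_def)
  define l where "l = J - n"
  have l1: "1 \<le> l" "l \<le> k" using Jn Jle by (auto simp: l_def)
  have ov: "\<forall>i<l. S ! i = S ! (k - l + i)"
  proof (intro allI impI)
    fix i assume i: "i < l"
    have j: "k - l + i < k" using l1 i by simp
    have "\<forall>j<k. \<omega> !! (J - k + j) = S ! j" using oJ unfolding occ_def by blast
    from this[rule_format, OF j] have "S ! (k - l + i) = \<omega> !! (J - k + (k - l + i))" by simp
    also have "J - k + (k - l + i) = n + i" using kJ l1 i Jn by (simp add: l_def)
    also have "\<omega> !! (n + i) = S ! i" using hS i l1 by simp
    finally show "S ! i = S ! (k - l + i)" by simp
  qed
  have F: "Fst (n + l) \<omega>" using oJ Jmin Jn by (simp add: Fst_def l_def)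
  have P: "pre (drop l S) (sdrop (n + l) \<omega>)"
    unfolding pre_def using hS l1 by (auto simp: add.assoc sdrop_snth)
  show "\<exists>l. 1 \<le> l \<and> l \<le> k \<and> (\<forall>i<l. S ! i = S ! (k - l + i)) \<and> Fst (n + l) \<omega> \<and> pre (drop l S) (sdrop (n + l) \<omega>)"
    using l1 ov F P by blast
next
  assume "\<exists>l. 1 \<le> l \<and> l \<le> k \<and> (\<forall>i<l. S ! i = S ! (k - l + i)) \<and> Fst (n + l) \<omega> \<and> pre (drop l S) (sdrop (n + l) \<omega>)"
  then obtain l where l1: "1 \<le> l" "l \<le> k" and ov: "\<forall>i<l. S ! i = S ! (k - l + i)"
    and F: "Fst (n + l) \<omega>" and P: "pre (drop l S) (sdrop (n + l) \<omega>)" by blast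
  have Tn: "T n \<omega>" using F l1 unfolding T_def Fst_def by auto
  have oc: "occ (n + l) \<omega>" using F by (simp add: Fst_def)
  have kl: "k \<le> n + l" using oc by (simp add: occ_def)
  have "\<omega> !! (n + j) = S ! j" if j: "j < k" for j
  proof (cases "j < l")
    case True
    have j2: "k - l + j < k" using j True l1 by simp
    have "\<forall>j<k. \<omega> !! (n + l - k + j) = S ! j" using oc unfolding occ_def by blast
    from this[rule_format, OF j2] have "\<omega> !! (n + l - k + (k - l + j)) = S ! (k - l + j)" .
    moreover have "n + l - k + (k - l + j) = n + j" using kl l1 True by simp
    ultimately show ?thesis using ov True by simp
  next
    case False
    have j2: "j - l < k - l" using j False by simp
    have "\<forall>i<k - l. sdrop (n + l) \<omega> !! i = S ! (l + i)" using P by (simp add: pre_def)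
    from this[rule_format, OF j2] have "\<omega> !! (n + l + (j - l)) = drop l S ! (j - l)"
      using False l1 j by (simp add: sdrop_snth)
    then show ?thesis using False j by simp
  qed
  then show "T n \<omega> \<and> pre S (sdrop n \<omega>)" using Tn by (simp add: pre_def sdrop_snth)
qed

lemma comb_sum:
  "(\<Sum>R\<in>overlap S. (if Fst (n + length R) \<omega> \<and> pre (drop (length R) S) (sdrop (n + length R) \<omega>) then 1 else 0 :: ennreal))
   = (if T n \<omega> \<and> pre S (sdrop n \<omega>) then 1 else 0)"
proof (cases "T n \<omega> \<and> pre S (sdrop n \<omega>)")
  case True
  then obtain l where l1: "1 \<le> l" "l \<le> k" and ov: "\<forall>i<l. S ! i = S ! (k - l + i)"
    and F: "Fst (n + l) \<omega>" and P: "pre (drop l S) (sdrop (n + l) \<omega>)" using comb by blast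
  define R0 where "R0 = take l S"
  have lR0: "length R0 = l" using l1 by (simp add: R0_def)
  have R0: "R0 \<in> overlap S" unfolding overlap_char using l1 ov lR0 by (simp add: R0_def)
  let ?f = "\<lambda>R. (if Fst (n + length R) \<omega> \<and> pre (drop (length R) S) (sdrop (n + length R) \<omega>) then 1 else 0 :: ennreal)"
  have "sum ?f (overlap S) = ?f R0 + sum ?f (overlap S - {R0})"
    by (rule sum.remove[OF finite_overlap R0])
  moreover have "sum ?f (overlap S - {R0}) = 0"
  proof (rule sum.neutral, rule ballI)
    fix R assume R: "R \<in> overlap S - {R0}"
    show "?f R = 0"
    proof (cases "Fst (n + length R) \<omega>")
      case True
      then have "length R = l" using Fst_unique[OF True F] by simp
      moreover have "R \<in> overlap S" using R by simp
      ultimately have "R = R0" unfolding overlap_char R0_def by auto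
      then show ?thesis using R by simp
    qed simp
  qed
  ultimately show ?thesis using True F P lR0 by simp
next
  case False
  let ?f = "\<lambda>R. (if Fst (n + length R) \<omega> \<and> pre (drop (length R) S) (sdrop (n + length R) \<omega>) then 1 else 0 :: ennreal)"
  have "sum ?f (overlap S) = 0"
  proof (intro sum.neutral ballI)
    fix R assume R: "R \<in> overlap S"
    have "\<not> (Fst (n + length R) \<omega> \<and> pre (drop (length R) S) (sdrop (n + length R) \<omega>))"
    proof
      assume a: "Fst (n + length R) \<omega> \<and> pre (drop (length R) S) (sdrop (n + length R) \<omega>)"
      have "1 \<le> length R \<and> length R \<le> k \<and> (\<forall>i<length R. S ! i = S ! (k - length R + i))"
        using R overlap_char by blast
      then have "T n \<omega> \<and> pre S (sdrop n \<omega>)" using a comb by blast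
      then show False using False by simp
    qed
    then show "?f R = 0" by simp
  qed
  then show ?thesis using False by simp
qed

end

lemma ennreal_cancel:
  fixes x z :: ennreal assumes y: "y > 0" and e: "x * ennreal y = z * ennreal y"
  shows "x = z"
proof -
  have "ennreal y * ennreal (1 / y) = 1" using y by (simp add: ennreal_mult''[symmetric])
  then have "x * ennreal y * ennreal (1 / y) = x" "z * ennreal y * ennreal (1 / y) = z"
    by (simp_all add: mult.assoc)
  then show ?thesis using e by metis
qed

lemma ind_and: "(if A \<and> B then 1 else 0 :: ennreal) = (if A then 1 else 0) * (if B then 1 else 0)"
  by simp

context pat begin

definition q :: "nat \<Rightarrow> ennreal" where "q n = (\<integral>\<^sup>+\<omega>. (if T n \<omega> then 1 else 0) \<partial>M)"
definition a :: "nat \<Rightarrow> ennreal" where "a n = (\<integral>\<^sup>+\<omega>. (if Fst n \<omega> then 1 else 0) \<partial>M)"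
definition c :: "nat list \<Rightarrow> ennreal" where "c R = ennreal (1 / wprob p R)"

lemma meas_pre: "(\<lambda>\<omega>. if pre w \<omega> then 1 else 0 :: ennreal) \<in> borel_measurable M"
  by (rule meas_dep_gen[where n="length w"]) (auto simp: pre_def)

lemma meas_pre_sdrop: "(\<lambda>\<omega>. if pre w (sdrop n \<omega>) then 1 else 0 :: ennreal) \<in> borel_measurable M"
  using measurable_compose[OF measurable_sdrop meas_pre] by simp

lemma overlap_set: "R \<in> overlap S \<Longrightarrow> set R \<subseteq> set S"
  unfolding overlap_def using set_mono_prefix by blast

lemma wprob_split: "wprob p S = wprob p (take l S) * wprob p (drop l S)"
  unfolding wprob_def by (metis append_take_drop_id map_append prod_list.append)

lemma ident: "q n = (\<Sum>R\<in>overlap S. c R * a (n + length R))"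
proof -
  have PS: "wprob p S > 0" by (rule wprob_pos) simp
  have L: "(\<integral>\<^sup>+\<omega>. (if T n \<omega> then 1 else 0) * (if pre S (sdrop n \<omega>) then 1 else 0) \<partial>M) = q n * ennreal (wprob p S)"
  proof -
    have dT: "(if T n \<omega> then 1 else 0::ennreal) = (if T n \<omega>' then 1 else 0)"
      if "\<And>i. i < n \<Longrightarrow> \<omega> !! i = \<omega>' !! i" for \<omega> \<omega>' using T_dep[OF that] by simp
    show ?thesis unfolding q_def by (subst factor_dep[OF meas_pre dT]) (auto simp: prob_preS)
  qed
  have Rt: "(\<integral>\<^sup>+\<omega>. (if Fst (n + length R) \<omega> then 1 else 0) * (if pre (drop (length R) S) (sdrop (n + length R) \<omega>) then 1 else 0) \<partial>M)
      = a (n + length R) * ennreal (wprob p (drop (length R) S))" for R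
  proof -
    have dT: "(if Fst (n + length R) \<omega> then 1 else 0::ennreal) = (if Fst (n + length R) \<omega>' then 1 else 0)"
      if "\<And>i. i < n + length R \<Longrightarrow> \<omega> !! i = \<omega>' !! i" for \<omega> \<omega>' using Fst_dep[OF that] by simp
    have s: "set (drop (length R) S) \<subseteq> set S" by (rule set_drop_subset)
    have F: "(\<integral>\<^sup>+\<omega>. (if Fst (n + length R) \<omega> then 1 else 0) * (if pre (drop (length R) S) (sdrop (n + length R) \<omega>) then 1 else 0) \<partial>M)
       = (\<integral>\<^sup>+\<omega>. (if Fst (n + length R) \<omega> then 1 else 0) \<partial>M) * (\<integral>\<^sup>+\<omega>. (if pre (drop (length R) S) \<omega> then 1 else 0) \<partial>M)"
      by (rule factor_dep[OF meas_pre]) (rule dT)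
    note F2 = prob_preS[OF s]
    show ?thesis unfolding a_def F F2 ..
  qed
  have "q n * ennreal (wprob p S) = (\<integral>\<^sup>+\<omega>. (\<Sum>R\<in>overlap S. (if Fst (n + length R) \<omega> then 1 else 0) * (if pre (drop (length R) S) (sdrop (n + length R) \<omega>) then 1 else 0)) \<partial>M)"
    unfolding L[symmetric] using comb_sum[of n] by (simp only: ind_and)
  also have "\<dots> = (\<Sum>R\<in>overlap S. a (n + length R) * ennreal (wprob p (drop (length R) S)))"
    by (subst nn_integral_sum) (auto simp: Rt intro!: borel_measurable_times_ennreal meas_Fst' meas_pre_sdrop)
  also have "\<dots> = (\<Sum>R\<in>overlap S. c R * a (n + length R)) * ennreal (wprob p S)"
    unfolding sum_distrib_right
  proof (rule sum.cong[OF refl])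
    fix R assume R: "R \<in> overlap S"
    have PR: "wprob p R > 0" using R by (intro wprob_pos overlap_set)
    have RR: "R = take (length R) S" using R overlap_char by blast
    have e: "wprob p (drop (length R) S) = (1 / wprob p R) * wprob p S"
      using wprob_split[of "length R"] RR PR by simp
    show "a (n + length R) * ennreal (wprob p (drop (length R) S)) = c R * a (n + length R) * ennreal (wprob p S)"
    proof -
      have "ennreal ((1 / wprob p R) * wprob p S) = ennreal (1 / wprob p R) * ennreal (wprob p S)"
        using PR PS by (intro ennreal_mult) auto
      then show ?thesis unfolding e c_def by (simp add: mult_ac)
    qed
  qed
  finally show ?thesis using ennreal_cancel[OF PS] by blast
qed

end

lemma suminf_one_top: "(\<Sum>n::nat. (1::ennreal)) = \<top>"
  by (simp add: suminf_eq_SUP ennreal_SUP_of_nat_eq_top)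

context pat begin

abbreviation W where "W \<omega> \<equiv> wait_time S \<omega>"
definition NO :: "nat stream \<Rightarrow> bool" where "NO \<omega> = (\<forall>i. \<not> occ i \<omega>)"

lemma pw_occ:
  assumes "\<not> NO \<omega>"
  shows "occ (W \<omega>) \<omega>" "\<And>i. i < W \<omega> \<Longrightarrow> \<not> occ i \<omega>" "k \<le> W \<omega>"
proof -
  from assms obtain i where "occ i \<omega>" by (auto simp: NO_def)
  then show o: "occ (W \<omega>) \<omega>" unfolding wait_eq by (rule LeastI)
  show "\<And>i. i < W \<omega> \<Longrightarrow> \<not> occ i \<omega>" unfolding wait_eq by (rule not_less_Least)
  show "k \<le> W \<omega>" using o by (simp add: occ_def)
qed

lemma T_iff: "\<not> NO \<omega> \<Longrightarrow> T n \<omega> \<longleftrightarrow> n < W \<omega>"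
  unfolding T_def using pw_occ[of \<omega>] by (meson le_less_trans not_le)

lemma Fst_iff: "\<not> NO \<omega> \<Longrightarrow> Fst j \<omega> \<longleftrightarrow> j = W \<omega>"
  unfolding Fst_def using pw_occ[of \<omega>] by (meson linorder_neqE_nat)

lemma T_NO: "NO \<omega> \<Longrightarrow> T n \<omega>" by (simp add: NO_def T_def)
lemma Fst_NO: "NO \<omega> \<Longrightarrow> \<not> Fst n \<omega>" by (simp add: NO_def Fst_def)

lemma meas_cT: "(\<lambda>\<omega>. x * (if T n \<omega> then 1 else 0::ennreal)) \<in> borel_measurable M"
  by (rule borel_measurable_times_ennreal[OF borel_measurable_const meas_T'])
lemma meas_cF: "(\<lambda>\<omega>. x * (if Fst n \<omega> then 1 else 0::ennreal)) \<in> borel_measurable M"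
  by (rule borel_measurable_times_ennreal[OF borel_measurable_const meas_Fst'])

lemma PT: "(\<Sum>n. f n * (if T n \<omega> then 1 else 0 :: ennreal)) = (if NO \<omega> then (\<Sum>n. f n) else (\<Sum>n<W \<omega>. f n))"
proof (cases "NO \<omega>")
  case True then show ?thesis by (simp add: T_NO)
next
  case False
  have "(\<Sum>n. f n * (if T n \<omega> then 1 else 0 :: ennreal)) = (\<Sum>n\<in>{..<W \<omega>}. f n * (if T n \<omega> then 1 else 0 :: ennreal))"
    by (rule suminf_finite) (auto simp: T_iff[OF False])
  then show ?thesis using False by (simp add: T_iff[OF False])
qed

lemma PF: "(\<Sum>n. f n * (if Fst (n + l) \<omega> then 1 else 0 :: ennreal)) = (if \<not> NO \<omega> \<and> l \<le> W \<omega> then f (W \<omega> - l) else 0)"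
proof (cases "NO \<omega>")
  case True then show ?thesis by (simp add: Fst_NO)
next
  case False
  show ?thesis
  proof (cases "l \<le> W \<omega>")
    case True
    have "(\<Sum>n. f n * (if Fst (n + l) \<omega> then 1 else 0 :: ennreal)) = (\<Sum>n\<in>{W \<omega> - l}. f n * (if Fst (n + l) \<omega> then 1 else 0 :: ennreal))"
      by (rule suminf_finite) (auto simp: Fst_iff[OF False])
    then show ?thesis using False True by (simp add: Fst_iff[OF False])
  next
    case lF: False
    have "(\<Sum>n. f n * (if Fst (n + l) \<omega> then 1 else 0 :: ennreal)) = (\<Sum>n\<in>{}. f n * (if Fst (n + l) \<omega> then 1 else 0 :: ennreal))"
      by (rule suminf_finite) (use lF in \<open>auto simp: Fst_iff[OF False]\<close>)
    then show ?thesis using lF by simp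
  qed
qed

lemma stepC:
  "(\<integral>\<^sup>+\<omega>. (\<Sum>n. f n * (if T n \<omega> then 1 else 0)) \<partial>M)
   = (\<Sum>R\<in>overlap S. c R * (\<integral>\<^sup>+\<omega>. (\<Sum>n. f n * (if Fst (n + length R) \<omega> then 1 else 0)) \<partial>M))"
proof -
  have A: "(\<integral>\<^sup>+\<omega>. (\<Sum>n. f n * (if Fst (n + l) \<omega> then 1 else 0)) \<partial>M) = (\<Sum>n. f n * a (n + l))" for l
    by (subst nn_integral_suminf[OF meas_cF]) (auto simp: a_def nn_integral_cmult meas_Fst')
  have "(\<integral>\<^sup>+\<omega>. (\<Sum>n. f n * (if T n \<omega> then 1 else 0)) \<partial>M) = (\<Sum>n. f n * q n)"
    by (subst nn_integral_suminf[OF meas_cT]) (auto simp: q_def nn_integral_cmult meas_T')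
  also have "\<dots> = (\<Sum>n. \<Sum>R\<in>overlap S. c R * (f n * a (n + length R)))"
    by (simp add: ident sum_distrib_left mult_ac)
  also have "\<dots> = (\<Sum>R\<in>overlap S. \<Sum>n. c R * (f n * a (n + length R)))"
    by (rule suminf_sum) simp
  also have "\<dots> = (\<Sum>R\<in>overlap S. c R * (\<Sum>n. f n * a (n + length R)))"
    by (simp add: ennreal_suminf_cmult)
  finally show ?thesis by (simp add: A)
qed

lemma c_fin: "(\<Sum>R\<in>overlap S. c R) < \<top>"
proof -
  have h: "0 \<le> 1 / wprob p R" if "R \<in> overlap S" for R
    using wprob_pos[OF overlap_set[OF that]] by simp
  show ?thesis unfolding c_def by (subst sum_ennreal) (use h in auto)
qed

lemma AE_NO: "AE \<omega> in M. \<not> NO \<omega>"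
proof -
  interpret S: prob_space M by (rule prob_space_S)
  let ?g = "\<lambda>\<omega>. (\<Sum>n. 1 * (if T n \<omega> then 1 else 0 :: ennreal))"
  have mg: "?g \<in> borel_measurable M"
    by (rule borel_measurable_suminf_order) (rule meas_cT)
  have le1: "(\<integral>\<^sup>+\<omega>. (\<Sum>n. 1 * (if Fst (n + length R) \<omega> then 1 else 0 :: ennreal)) \<partial>M) \<le> 1" for R
  proof -
    have "(\<integral>\<^sup>+\<omega>. (\<Sum>n. 1 * (if Fst (n + length R) \<omega> then 1 else 0 :: ennreal)) \<partial>M) \<le> (\<integral>\<^sup>+\<omega>. 1 \<partial>M)"
      by (rule nn_integral_mono) (simp only: PF, simp)
    then show ?thesis by (simp add: S.emeasure_space_1)
  qed
  have "integral\<^sup>N M ?g = (\<Sum>R\<in>overlap S. c R * (\<integral>\<^sup>+\<omega>. (\<Sum>n. 1 * (if Fst (n + length R) \<omega> then 1 else 0 :: ennreal)) \<partial>M))"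
    by (rule stepC)
  also have "\<dots> \<le> (\<Sum>R\<in>overlap S. c R * 1)"
    by (intro sum_mono mult_left_mono le1) simp
  also have "\<dots> < \<top>" using c_fin by simp
  finally have fin: "integral\<^sup>N M ?g \<noteq> \<infinity>" by simp
  have gtop: "?g \<omega> = \<top>" if "NO \<omega>" for \<omega> using that by (simp add: T_NO suminf_one_top)
  from nn_integral_PInf_AE[OF mg fin] show ?thesis
    by eventually_elim (use gtop in fastforce)
qed

end

lemma sum_odd: "(\<Sum>n<N. 2 * real n + 1) = real N ^ 2"
  by (induction N) (auto simp: power2_eq_square algebra_simps)

context pat begin

lemma meas_Wf: "(\<lambda>\<omega>. h (W \<omega>)) \<in> borel_measurable M"
  by (rule measurable_compose[OF meas_W]) simp

lemma AE_Wk: "AE \<omega> in M. k \<le> W \<omega>"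
  using AE_NO by eventually_elim (rule pw_occ(3))

lemma overlap_len: "R \<in> overlap S \<Longrightarrow> length R \<le> k"
  using overlap_char by blast

lemma master:
  assumes g: "\<And>n. g n \<ge> 0"
  shows "(\<integral>\<^sup>+\<omega>. ennreal (\<Sum>n<W \<omega>. g n) \<partial>M) = (\<Sum>R\<in>overlap S. c R * (\<integral>\<^sup>+\<omega>. ennreal (g (W \<omega> - length R)) \<partial>M))"
proof -
  have L: "(\<integral>\<^sup>+\<omega>. (\<Sum>n. ennreal (g n) * (if T n \<omega> then 1 else 0)) \<partial>M) = (\<integral>\<^sup>+\<omega>. ennreal (\<Sum>n<W \<omega>. g n) \<partial>M)"
    by (rule nn_integral_cong_AE, use AE_NO in eventually_elim) (simp add: PT sum_ennreal g)
  have R: "(\<integral>\<^sup>+\<omega>. (\<Sum>n. ennreal (g n) * (if Fst (n + length R) \<omega> then 1 else 0)) \<partial>M) = (\<integral>\<^sup>+\<omega>. ennreal (g (W \<omega> - length R)) \<partial>M)"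
    if R: "R \<in> overlap S" for R
  proof (rule nn_integral_cong_AE)
    show "AE \<omega> in M. (\<Sum>n. ennreal (g n) * (if Fst (n + length R) \<omega> then 1 else 0)) = ennreal (g (W \<omega> - length R))"
      using AE_NO AE_Wk
    proof eventually_elim
      case (elim \<omega>)
      then have "length R \<le> W \<omega>" using overlap_len[OF R] by simp
      then show ?case using elim by (simp add: PF)
    qed
  qed
  show ?thesis using stepC[of "\<lambda>n. ennreal (g n)"] L R by simp
qed

definition C :: real where "C = (\<Sum>R\<in>overlap S. 1 / wprob p R)"

lemma inv_nonneg: "R \<in> overlap S \<Longrightarrow> 0 \<le> 1 / wprob p R"
  using wprob_pos[OF overlap_set] by (simp add: less_imp_le)

lemma C_nonneg: "0 \<le> C" unfolding C_def by (rule sum_nonneg) (rule inv_nonneg)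

lemma HB1: "has_bochner_integral M (\<lambda>\<omega>. real (W \<omega>)) C"
proof (rule has_bochner_integral_nn_integral)
  interpret S: prob_space M by (rule prob_space_S)
  show "(\<lambda>\<omega>. real (W \<omega>)) \<in> borel_measurable M" by (rule meas_Wf)
  show "AE x in M. 0 \<le> real (W x)" by simp
  show "0 \<le> C" by (rule C_nonneg)
  have "(\<integral>\<^sup>+\<omega>. ennreal (real (W \<omega>)) \<partial>M) = (\<integral>\<^sup>+\<omega>. ennreal (\<Sum>n<W \<omega>. 1) \<partial>M)" by simp
  also have "\<dots> = (\<Sum>R\<in>overlap S. c R * (\<integral>\<^sup>+\<omega>. ennreal 1 \<partial>M))" by (rule master) simp
  also have "\<dots> = (\<Sum>R\<in>overlap S. ennreal (1 / wprob p R))" by (simp add: S.emeasure_space_1 c_def)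
  also have "\<dots> = ennreal C" unfolding C_def by (rule sum_ennreal) (rule inv_nonneg)
  finally show "(\<integral>\<^sup>+\<omega>. ennreal (real (W \<omega>)) \<partial>M) = ennreal C" .
qed

definition E2 :: real where "E2 = (\<Sum>R\<in>overlap S. (1 / wprob p R) * (2 * C - 2 * real (length R) + 1))"

lemma HBR:
  assumes R: "R \<in> overlap S"
  shows "(\<integral>\<^sup>+\<omega>. ennreal (2 * real (W \<omega> - length R) + 1) \<partial>M) = ennreal (2 * C - 2 * real (length R) + 1)"
    and "0 \<le> 2 * C - 2 * real (length R) + 1"
proof -
  interpret S: prob_space M by (rule prob_space_S)
  let ?h = "\<lambda>\<omega>. 2 * real (W \<omega> - length R) + 1"
  let ?h' = "\<lambda>\<omega>. 2 * real (W \<omega>) - 2 * real (length R) + 1"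
  have mh: "?h \<in> borel_measurable M" by (rule meas_Wf)
  have mh': "?h' \<in> borel_measurable M" by (rule meas_Wf)
  have ae: "AE \<omega> in M. ?h' \<omega> = ?h \<omega>"
    using AE_Wk
  proof eventually_elim
    case (elim \<omega>)
    then have "length R \<le> W \<omega>" using overlap_len[OF R] by simp
    then show ?case by (simp add: of_nat_diff)
  qed
  have iY: "integrable M (\<lambda>\<omega>. real (W \<omega>))" using HB1 by (rule integrable.intros)
  have IY: "integral\<^sup>L M (\<lambda>\<omega>. real (W \<omega>)) = C" using HB1 by (rule has_bochner_integral_integral_eq)
  have i': "integrable M ?h'" using iY by simp
  have I': "integral\<^sup>L M ?h' = 2 * C - 2 * real (length R) + 1"
    using iY IY by (simp add: S.prob_space)
  have ih: "integrable M ?h" using integrable_cong_AE_imp[OF i' mh ae] .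
  have Ih: "integral\<^sup>L M ?h = 2 * C - 2 * real (length R) + 1"
    using integral_cong_AE[OF mh' mh ae] I' by simp
  show "(\<integral>\<^sup>+\<omega>. ennreal (?h \<omega>) \<partial>M) = ennreal (2 * C - 2 * real (length R) + 1)"
    using nn_integral_eq_integral[OF ih] Ih by simp
  show "0 \<le> 2 * C - 2 * real (length R) + 1"
    using integral_nonneg_AE[of ?h M] Ih by simp
qed

lemma HB2: "has_bochner_integral M (\<lambda>\<omega>. real (W \<omega>) ^ 2) E2"
proof (rule has_bochner_integral_nn_integral)
  show "(\<lambda>\<omega>. real (W \<omega>) ^ 2) \<in> borel_measurable M" by (rule meas_Wf)
  show "AE x in M. 0 \<le> real (W x) ^ 2" by simp
  show "0 \<le> E2" unfolding E2_def
    by (intro sum_nonneg mult_nonneg_nonneg inv_nonneg HBR(2))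
  have "(\<integral>\<^sup>+\<omega>. ennreal (real (W \<omega>) ^ 2) \<partial>M) = (\<integral>\<^sup>+\<omega>. ennreal (\<Sum>n<W \<omega>. 2 * real n + 1) \<partial>M)"
    by (simp add: sum_odd)
  also have "\<dots> = (\<Sum>R\<in>overlap S. c R * (\<integral>\<^sup>+\<omega>. ennreal (2 * real (W \<omega> - length R) + 1) \<partial>M))"
    by (rule master) simp
  also have "\<dots> = (\<Sum>R\<in>overlap S. ennreal ((1 / wprob p R) * (2 * C - 2 * real (length R) + 1)))"
  proof (rule sum.cong[OF refl])
    fix R assume R: "R \<in> overlap S"
    show "c R * (\<integral>\<^sup>+\<omega>. ennreal (2 * real (W \<omega> - length R) + 1) \<partial>M) = ennreal ((1 / wprob p R) * (2 * C - 2 * real (length R) + 1))"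
      unfolding HBR(1)[OF R] c_def by (rule ennreal_mult[OF inv_nonneg[OF R] HBR(2)[OF R], symmetric])
  qed
  also have "\<dots> = ennreal E2" unfolding E2_def
    by (rule sum_ennreal) (intro mult_nonneg_nonneg inv_nonneg HBR(2))
  finally show "(\<integral>\<^sup>+\<omega>. ennreal (real (W \<omega>) ^ 2) \<partial>M) = ennreal E2" .
qed

lemma E2_eq: "E2 - C^2 = C^2 + (\<Sum>R\<in>overlap S. ((1 - real (length R))^2 - (real (length R))^2) / wprob p R)"
proof -
  have "E2 = (\<Sum>R\<in>overlap S. 2 * C * (1 / wprob p R) + ((1 - real (length R))^2 - (real (length R))^2) / wprob p R)"
    unfolding E2_def by (rule sum.cong[OF refl]) (simp add: power2_eq_square algebra_simps add_divide_distrib[symmetric] diff_divide_distrib[symmetric])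
  also have "\<dots> = 2 * C * C + (\<Sum>R\<in>overlap S. ((1 - real (length R))^2 - (real (length R))^2) / wprob p R)"
    by (simp add: sum.distrib sum_distrib_left C_def)
  finally show ?thesis by (simp add: power2_eq_square)
qed

lemma final:
  "(let M = rolls m p; Y = (\<lambda>\<omega>. real (wait_time S \<omega>));
          EY = (\<integral>\<omega>. Y \<omega> \<partial>M); EY2 = (\<integral>\<omega>. (Y \<omega>)^2 \<partial>M);
          VarY = (\<integral>\<omega>. (Y \<omega> - EY)^2 \<partial>M)
      in VarY = EY2 - EY^2 \<and>
         EY2 - EY^2 = (\<Sum>R\<in>overlap S. 1 / wprob p R)^2
                     + (\<Sum>R\<in>overlap S. ((1 - real (length R))^2 - (real (length R))^2) / wprob p R))"
proof -
  interpret S: prob_space M by (rule prob_space_S)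
  have iY: "integrable M (\<lambda>\<omega>. real (W \<omega>))" using HB1 by (rule integrable.intros)
  have IY: "integral\<^sup>L M (\<lambda>\<omega>. real (W \<omega>)) = C" using HB1 by (rule has_bochner_integral_integral_eq)
  have iY2: "integrable M (\<lambda>\<omega>. real (W \<omega>) ^ 2)" using HB2 by (rule integrable.intros)
  have IY2: "integral\<^sup>L M (\<lambda>\<omega>. real (W \<omega>) ^ 2) = E2" using HB2 by (rule has_bochner_integral_integral_eq)
  have "integral\<^sup>L M (\<lambda>\<omega>. (real (W \<omega>) - C) ^ 2) = integral\<^sup>L M (\<lambda>\<omega>. real (W \<omega>) ^ 2 - 2 * C * real (W \<omega>) + C ^ 2)"
    by (rule Bochner_Integration.integral_cong) (auto simp: power2_eq_square algebra_simps)
  also have "\<dots> = E2 - 2 * C * C + C ^ 2"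
    using iY iY2 IY IY2 by (simp add: S.prob_space)
  finally have V: "integral\<^sup>L M (\<lambda>\<omega>. (real (W \<omega>) - C) ^ 2) = E2 - C ^ 2" by (simp add: power2_eq_square)
  show ?thesis unfolding Let_def M_eq IY IY2 V using E2_eq by (simp add: C_def)
qed

end

theorem corollary4p11:
  fixes m :: nat and p :: "nat \<Rightarrow> real" and S :: "nat list"
  assumes "m \<ge> 1"
    and "\<And>i. i \<in> {1..m} \<Longrightarrow> p i \<ge> 0"
    and "(\<Sum>i=1..m. p i) = 1"
    and "S \<noteq> []"
    and "\<And>x. x \<in> set S \<Longrightarrow> x \<in> {1..m} \<and> p x > 0"
  shows
    "(let M = rolls m p; Y = (\<lambda>\<omega>. real (wait_time S \<omega>));
          EY = (\<integral>\<omega>. Y \<omega> \<partial>M); EY2 = (\<integral>\<omega>. (Y \<omega>)^2 \<partial>M);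
          VarY = (\<integral>\<omega>. (Y \<omega> - EY)^2 \<partial>M)
      in VarY = EY2 - EY^2 \<and>
         EY2 - EY^2 = (\<Sum>R\<in>overlap S. 1 / wprob p R)^2
                     + (\<Sum>R\<in>overlap S. ((1 - real (length R))^2 - (real (length R))^2) / wprob p R))"
proof -
  interpret pat m p S using assms by unfold_locales auto
  show ?thesis by (rule final)
qed

end
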